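(* Let $S$ be a semigroup which is categorical at zero, $0$-left cancellative, right reductive, has right local units and admits least common multiples. Then the nonzero elements of the inverse hull $\mathcal H(S)$ are precisely the elements $\theta_s\theta_t^{-1}$ with $s,t\in S\setminus\{0\}$ and $s^+=t^+$. Moreover, if $s_1,t_1,s_2,t_2\in S\setminus\{0\}$ with $s_1^+=t_1^+$ and $s_2^+=t_2^+$, then $\theta_{s_1}\theta_{t_1}^{-1}=\theta_{s_2}\theta_{t_2}^{-1}$ if and only if there exist $x,y\in S$ with $xy=s_1^+$, $yx=s_2^+$, $s_1x=s_2$, $t_1x=t_2$, $s_2y=s_1$ and $t_2y=t_1$.
   Context: $S$ has zero $0$, $S'=S\setminus\{0\}$. Categorical at zero: $rs\neq0$ and $st\neq0$ imply $rst\neq0$. $0$-left cancellative: $st=sr\neq0\Rightarrow t=r$. Right reductive: $sx=tx$ for all $x$ implies $s=t$. Right local units: each $s$ has an idempotent $e$ with $se=s$; under these hypotheses each nonzero $s$ has a unique idempotent $s^+$ with $ss^+=s$. Least common multiples: with $\tilde S=S\cup\{1\}$, $s\mid t$ iff $t\in s\tilde S$; $r$ is an lcm of $s,t$ if $sS\cap tS=rS$, $s\mid r$, $t\mid r$; every pair has one. $\theta_s:\{x\in S':sx\neq0\}\to sS\setminus\{0\}$, $x\mapsto sx$; $\mathcal H(S)$ is the inverse semigroup of partial bijections of $S'$ generated by all $\theta_s$ (its zero is the empty map). *)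

theory Defs
  imports Main
begin

text \<open>A semigroup with zero is modelled as a type of class semigroup_mult and mult_zero
  (0 * a = 0 and a * 0 = 0); the semigroup S is the whole type, S' is the set of nonzero elements.\<close>

definition categorical_at_zero :: "('a::{semigroup_mult,mult_zero}) itself \<Rightarrow> bool" where
  "categorical_at_zero _ \<longleftrightarrow>
     (\<forall>r s t :: 'a. r * s \<noteq> 0 \<and> s * t \<noteq> 0 \<longrightarrow> r * s * t \<noteq> 0)"

definition zero_left_cancellative :: "('a::{semigroup_mult,mult_zero}) itself \<Rightarrow> bool" where
  "zero_left_cancellative _ \<longleftrightarrow>
     (\<forall>s t r :: 'a. s * t = s * r \<and> s * t \<noteq> 0 \<longrightarrow> t = r)"

definition right_reductive :: "('a::{semigroup_mult,mult_zero}) itself \<Rightarrow> bool" where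
  "right_reductive _ \<longleftrightarrow> (\<forall>s t :: 'a. (\<forall>x. s * x = t * x) \<longrightarrow> s = t)"

definition right_local_units :: "('a::{semigroup_mult,mult_zero}) itself \<Rightarrow> bool" where
  "right_local_units _ \<longleftrightarrow> (\<forall>s :: 'a. \<exists>e. e * e = e \<and> s * e = s)"

text \<open>Divisibility with adjoined identity: s divides t iff t = s or t = s * x.\<close>
definition sdvd :: "'a::{semigroup_mult,mult_zero} \<Rightarrow> 'a \<Rightarrow> bool" where
  "sdvd s t \<longleftrightarrow> t = s \<or> (\<exists>x. t = s * x)"

definition principal_right :: "'a::{semigroup_mult,mult_zero} \<Rightarrow> 'a set" where
  "principal_right s = {s * x | x. True}"

definition is_lcm :: "'a::{semigroup_mult,mult_zero} \<Rightarrow> 'a \<Rightarrow> 'a \<Rightarrow> bool" where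
  "is_lcm r s t \<longleftrightarrow> principal_right s \<inter> principal_right t = principal_right r
      \<and> sdvd s r \<and> sdvd t r"

definition has_lcms :: "('a::{semigroup_mult,mult_zero}) itself \<Rightarrow> bool" where
  "has_lcms _ \<longleftrightarrow> (\<forall>s t :: 'a. \<exists>r. is_lcm r s t)"

definition splus :: "'a::{semigroup_mult,mult_zero} \<Rightarrow> 'a" where
  "splus s = (THE e. e * e = e \<and> s * e = s)"

definition theta :: "'a::{semigroup_mult,mult_zero} \<Rightarrow> 'a \<Rightarrow> 'a option" where
  "theta s = (\<lambda>x. if x \<noteq> 0 \<and> s * x \<noteq> 0 then Some (s * x) else None)"

definition pinv :: "('a \<Rightarrow> 'b option) \<Rightarrow> 'b \<Rightarrow> 'a option" where
  "pinv f = (\<lambda>y. if \<exists>x. f x = Some y then Some (THE x. f x = Some y) else None)"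

text \<open>Composition (map_comp) is
  right-to-left: applying map_comp f g to x applies g first, then f.\<close>
inductive_set inverse_hull :: "('a::{semigroup_mult,mult_zero} \<Rightarrow> 'a option) set" where
  gen: "theta s \<in> inverse_hull"
| inv: "f \<in> inverse_hull \<Longrightarrow> pinv f \<in> inverse_hull"
| comp: "f \<in> inverse_hull \<Longrightarrow> g \<in> inverse_hull \<Longrightarrow> f \<circ>\<^sub>m g \<in> inverse_hull"

end

theory Submission
  imports Defs
begin

lemma map_eqI': "(\<And>w v. f w = Some v \<longleftrightarrow> g w = Some v) \<Longrightarrow> f = g"
  by (rule ext) (metis not_Some_eq)

lemma pinv_Some:
  assumes "\<And>x y v. f x = Some v \<Longrightarrow> f y = Some v \<Longrightarrow> x = y"
  shows "pinv f y = Some x \<longleftrightarrow> f x = Some y"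
proof
  assume "pinv f y = Some x"
  then have ex: "\<exists>x. f x = Some y" and x: "x = (THE x. f x = Some y)"
    unfolding pinv_def by (auto split: if_splits)
  from ex obtain x0 where "f x0 = Some y" by blast
  then have "(THE x. f x = Some y) = x0" using assms by (intro the_equality) auto
  then show "f x = Some y" using x \<open>f x0 = Some y\<close> by simp
next
  assume h: "f x = Some y"
  then have "(THE x. f x = Some y) = x" using assms by (intro the_equality) auto
  then show "pinv f y = Some x" using h unfolding pinv_def by auto
qed

locale hyp =
  fixes T :: "('a::{semigroup_mult,mult_zero}) itself"
  assumes cz: "categorical_at_zero T" and zl: "zero_left_cancellative T"
    and rr: "right_reductive T" and rl: "right_local_units T" and hl: "has_lcms T"
begin

lemma cat: "r*s \<noteq> 0 \<Longrightarrow> s*t \<noteq> 0 \<Longrightarrow> r*s*t \<noteq> (0::'a)"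
  using cz unfolding categorical_at_zero_def by blast
lemma canc: "s*t = s*r \<Longrightarrow> s*t \<noteq> (0::'a) \<Longrightarrow> t = r"
  using zl unfolding zero_left_cancellative_def by blast
lemma red: "(\<And>x. s*x = t*x) \<Longrightarrow> s = (t::'a)"
  using rr unfolding right_reductive_def by blast
lemma unit: "\<exists>e::'a. e*e=e \<and> s*e = s"
  using rl unfolding right_local_units_def by blast
lemma lcm: "\<exists>r::'a. is_lcm r s t"
  using hl unfolding has_lcms_def by blast

lemma idem_unique:
  fixes s e f :: 'a
  assumes "s\<noteq>0" "s*e=s" "s*f=s"
  shows "e=f"
proof (rule red)
  fix x
  show "e*x = f*x"
  proof (cases "s*x = 0")
    case True
    have "e*x = 0"
    proof (rule ccontr)
      assume "e*x \<noteq> 0"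
      then have "s*e*x \<noteq> 0" using cat[of s e x] assms by simp
      then show False using True assms by simp
    qed
    moreover have "f*x = 0"
    proof (rule ccontr)
      assume "f*x \<noteq> 0"
      then have "s*f*x \<noteq> 0" using cat[of s f x] assms by simp
      then show False using True assms by simp
    qed
    ultimately show ?thesis by simp
  next
    case False
    have "s*(e*x) = s*(f*x)" using assms by (simp add: mult.assoc[symmetric])
    moreover have "s*(e*x) \<noteq> 0" using assms False by (simp add: mult.assoc[symmetric])
    ultimately show ?thesis using canc by blast
  qed
qed

lemma splus_eq: "s \<noteq> 0 \<Longrightarrow> e*e=e \<Longrightarrow> s*e = s \<Longrightarrow> splus s = (e::'a)"
  unfolding splus_def by (rule the_equality) (auto intro: idem_unique)

lemma splus: assumes "(s::'a) \<noteq> 0" shows "splus s * splus s = splus s" "s * splus s = s"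
proof -
  obtain e where "e*e=e" "s*e=s" using unit by blast
  then have "splus s = e" using splus_eq assms by blast
  then show "splus s * splus s = splus s" "s * splus s = s" using \<open>e*e=e\<close> \<open>s*e=s\<close> by auto
qed

lemma splus_nz: "(s::'a) \<noteq> 0 \<Longrightarrow> splus s \<noteq> 0"
  using splus(2) by (metis mult_zero_right)

lemma idem_fix: "(e::'a)*e = e \<Longrightarrow> e*x \<noteq> 0 \<Longrightarrow> e*x = x"
  using canc[of e "e*x" x] by (simp add: mult.assoc[symmetric])

lemma nz_splus: assumes "(s::'a) \<noteq> 0" shows "(s*x \<noteq> 0) = (splus s * x \<noteq> 0)"
proof
  assume "s*x \<noteq> 0"
  then show "splus s * x \<noteq> 0" using splus(2)[OF assms]
    by (metis mult.assoc mult_zero_right)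
next
  assume "splus s * x \<noteq> 0"
  then have "s * splus s * x \<noteq> 0" using cat[of s "splus s" x] splus(2)[OF assms] assms by simp
  then show "s*x \<noteq> 0" using splus(2)[OF assms] by simp
qed

lemma splus_mult: assumes "(s::'a)*b \<noteq> 0" shows "splus (s*b) = splus b"
proof -
  have b: "b \<noteq> 0" using assms by auto
  show ?thesis using splus[OF b] assms by (intro splus_eq) (auto simp: mult.assoc)
qed

lemma theta_Some: "theta s x = Some v \<longleftrightarrow> (s::'a)*x \<noteq> 0 \<and> v = s*x"
  unfolding theta_def by auto

lemma pinv_theta: "pinv (theta t) w = Some z \<longleftrightarrow> (t::'a)*z \<noteq> 0 \<and> w = t*z"
proof -
  have "pinv (theta t) w = Some z \<longleftrightarrow> theta t z = Some w"
    by (rule pinv_Some) (auto simp: theta_Some intro: canc)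
  then show ?thesis by (auto simp: theta_Some)
qed

lemma TT: "(theta s \<circ>\<^sub>m pinv (theta t)) w = Some v \<longleftrightarrow>
   (\<exists>z. (t::'a)*z \<noteq> 0 \<and> s*z \<noteq> 0 \<and> w = t*z \<and> v = s*z)"
  by (auto simp: map_comp_Some_iff pinv_theta theta_Some)

lemma TT_empty: "\<not>(\<exists>z. (t::'a)*z\<noteq>0 \<and> s*z\<noteq>0) \<Longrightarrow> theta s \<circ>\<^sub>m pinv (theta t) = Map.empty"
  by (rule map_eqI') (auto simp: TT)

lemma theta_as: assumes "(s::'a) \<noteq> 0" shows "theta s = theta s \<circ>\<^sub>m pinv (theta (splus s))"
proof (rule map_eqI')
  fix w v
  show "theta s w = Some v \<longleftrightarrow> (theta s \<circ>\<^sub>m pinv (theta (splus s))) w = Some v"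
  proof
    assume "theta s w = Some v"
    then have h: "s*w \<noteq> 0" "v = s*w" by (auto simp: theta_Some)
    then have "splus s * w \<noteq> 0" using nz_splus[OF assms] by simp
    then have "splus s * w = w" using idem_fix splus(1)[OF assms] by blast
    then show "(theta s \<circ>\<^sub>m pinv (theta (splus s))) w = Some v"
      unfolding TT using h \<open>splus s * w \<noteq> 0\<close> by metis
  next
    assume "(theta s \<circ>\<^sub>m pinv (theta (splus s))) w = Some v"
    then obtain z where z: "splus s * z \<noteq> 0" "s*z \<noteq> 0" "w = splus s * z" "v = s*z"
      unfolding TT by blast
    then have "w = z" using idem_fix splus(1)[OF assms] by metis
    then show "theta s w = Some v" using z by (simp add: theta_Some)
  qed
qed

lemma pinv_TT: "pinv (theta s \<circ>\<^sub>m pinv (theta t)) = theta (t::'a) \<circ>\<^sub>m pinv (theta s)"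
proof (rule map_eqI')
  fix w v
  have "pinv (theta s \<circ>\<^sub>m pinv (theta t)) w = Some v \<longleftrightarrow> (theta s \<circ>\<^sub>m pinv (theta t)) v = Some w"
  proof (rule pinv_Some)
    fix x y u
    assume "(theta s \<circ>\<^sub>m pinv (theta t)) x = Some u" "(theta s \<circ>\<^sub>m pinv (theta t)) y = Some u"
    then obtain z1 z2 where "s*z1 \<noteq> 0" "x = t*z1" "u = s*z1" "y = t*z2" "u = s*z2"
      unfolding TT by blast
    then have "z1 = z2" using canc by metis
    then show "x = y" using \<open>x = t*z1\<close> \<open>y = t*z2\<close> by simp
  qed
  then show "pinv (theta s \<circ>\<^sub>m pinv (theta t)) w = Some v \<longleftrightarrow> (theta t \<circ>\<^sub>m pinv (theta s)) w = Some v"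
    unfolding TT by blast
qed

definition good :: "('a \<Rightarrow> 'a option) \<Rightarrow> bool" where
  "good f \<longleftrightarrow> f = Map.empty \<or> (\<exists>s t. s\<noteq>0 \<and> t\<noteq>0 \<and> splus s = splus t \<and> f = theta s \<circ>\<^sub>m pinv (theta t))"

lemma good_TT: assumes "s \<noteq> 0 \<Longrightarrow> t \<noteq> 0 \<Longrightarrow> splus s = splus (t::'a)"
  shows "good (theta s \<circ>\<^sub>m pinv (theta t))"
proof (cases "s \<noteq> 0 \<and> t \<noteq> 0")
  case True then show ?thesis using assms unfolding good_def by blast
next
  case False
  then have "theta s \<circ>\<^sub>m pinv (theta t) = Map.empty" by (intro TT_empty) auto
  then show ?thesis unfolding good_def by blast
qed

lemma comp_good:
  fixes s1 t1 s2 t2 :: 'a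
  assumes nz: "s1 \<noteq> 0" "t1 \<noteq> 0" "s2 \<noteq> 0" "t2 \<noteq> 0"
  shows "good ((theta s1 \<circ>\<^sub>m pinv (theta t1)) \<circ>\<^sub>m (theta s2 \<circ>\<^sub>m pinv (theta t2)))"
proof -
  obtain r where r: "is_lcm r s2 t1" using lcm by blast
  then have PR: "principal_right s2 \<inter> principal_right t1 = principal_right r"
    unfolding is_lcm_def by blast
  let ?F = "(theta s1 \<circ>\<^sub>m pinv (theta t1)) \<circ>\<^sub>m (theta s2 \<circ>\<^sub>m pinv (theta t2))"
  have unf: "?F w = Some v \<longleftrightarrow> (\<exists>u z1 z2. t2*z2 \<noteq> 0 \<and> s2*z2 \<noteq> 0 \<and> w = t2*z2 \<and> u = s2*z2
      \<and> t1*z1 \<noteq> 0 \<and> s1*z1 \<noteq> 0 \<and> u = t1*z1 \<and> v = s1*z1)" for w v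
    unfolding map_comp_Some_iff[of "theta s1 \<circ>\<^sub>m pinv (theta t1)"] TT by blast
  show ?thesis
  proof (cases "r = 0")
    case True
    have "?F = Map.empty"
    proof (rule map_eqI')
      fix w v
      show "?F w = Some v \<longleftrightarrow> Map.empty w = Some v"
      proof (simp, rule notI)
        assume "?F w = Some v"
        then obtain z1 z2 where z: "s2*z2 \<noteq> 0" "s2*z2 = t1*z1" unfolding unf by metis
        then have "s2*z2 \<in> principal_right s2 \<inter> principal_right t1"
          unfolding principal_right_def by (auto intro: exI[of _ z2])
        then have "s2*z2 \<in> principal_right r" using PR by simp
        then show False using True z unfolding principal_right_def by auto
      qed
    qed
    then show ?thesis unfolding good_def by blast
  next
    case False
    have "r \<in> principal_right r" using splus(2)[OF False] unfolding principal_right_def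
      by (metis (mono_tags, lifting) mem_Collect_eq)
    then have "r \<in> principal_right s2 \<inter> principal_right t1" using PR by simp
    then obtain a b where ra: "r = s2*a" and rb: "r = t1*b" unfolding principal_right_def by blast
    have "?F = theta (s1*b) \<circ>\<^sub>m pinv (theta (t2*a))"
    proof (rule map_eqI')
      fix w v
      show "?F w = Some v \<longleftrightarrow> (theta (s1*b) \<circ>\<^sub>m pinv (theta (t2*a))) w = Some v"
        unfolding TT unf
      proof
        assume "\<exists>u z1 z2. t2*z2 \<noteq> 0 \<and> s2*z2 \<noteq> 0 \<and> w = t2*z2 \<and> u = s2*z2
          \<and> t1*z1 \<noteq> 0 \<and> s1*z1 \<noteq> 0 \<and> u = t1*z1 \<and> v = s1*z1"
        then obtain u z1 z2 where z: "t2*z2 \<noteq> 0" "s2*z2 \<noteq> 0" "w = t2*z2" "u = s2*z2"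
          "t1*z1 \<noteq> 0" "s1*z1 \<noteq> 0" "u = t1*z1" "v = s1*z1" by blast
        then have "u \<in> principal_right s2 \<inter> principal_right t1"
          unfolding principal_right_def by (auto intro: exI[of _ z1] exI[of _ z2])
        then have "u \<in> principal_right r" using PR by simp
        then obtain c where c: "u = r*c" unfolding principal_right_def by blast
        have "s2*z2 = s2*(a*c)" using c z ra by (simp add: mult.assoc)
        then have z2: "z2 = a*c" using canc z by blast
        have "t1*z1 = t1*(b*c)" using c z rb by (simp add: mult.assoc)
        then have z1: "z1 = b*c" using canc z by blast
        show "\<exists>z. t2*a*z \<noteq> 0 \<and> s1*b*z \<noteq> 0 \<and> w = t2*a*z \<and> v = s1*b*z"
          using z z1 z2 by (intro exI[of _ c]) (simp add: mult.assoc)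
      next
        assume "\<exists>z. t2*a*z \<noteq> 0 \<and> s1*b*z \<noteq> 0 \<and> w = t2*a*z \<and> v = s1*b*z"
        then obtain z where z: "t2*a*z \<noteq> 0" "s1*b*z \<noteq> 0" "w = t2*a*z" "v = s1*b*z" by blast
        have az: "a*z \<noteq> 0" using z(1) by (metis mult.assoc mult_zero_right)
        have "s2*a*z \<noteq> 0" using cat[of s2 a z] az False ra by simp
        then show "\<exists>u z1 z2. t2*z2 \<noteq> 0 \<and> s2*z2 \<noteq> 0 \<and> w = t2*z2 \<and> u = s2*z2
          \<and> t1*z1 \<noteq> 0 \<and> s1*z1 \<noteq> 0 \<and> u = t1*z1 \<and> v = s1*z1"
          using z ra rb az \<open>s2*a*z \<noteq> 0\<close> mult.assoc[of t1 b z] mult.assoc[of s2 a z] by (rule_tac x="r*z" in exI, rule_tac x="b*z" in exI, rule_tac x="a*z" in exI) (simp add: mult.assoc)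
      qed
    qed
    moreover have "good (theta (s1*b) \<circ>\<^sub>m pinv (theta (t2*a)))"
    proof (rule good_TT)
      assume h: "s1*b \<noteq> 0" "t2*a \<noteq> 0"
      have "splus (s1*b) = splus b" using splus_mult h by blast
      also have "\<dots> = splus (t1*b)" using splus_mult False rb by metis
      also have "\<dots> = splus (s2*a)" using ra rb by simp
      also have "\<dots> = splus a" using splus_mult False ra by metis
      also have "\<dots> = splus (t2*a)" using splus_mult h by metis
      finally show "splus (s1*b) = splus (t2*a)" .
    qed
    ultimately show ?thesis by simp
  qed
qed

lemma hull_good: "f \<in> inverse_hull \<Longrightarrow> good (f :: 'a \<Rightarrow> 'a option)"
proof (induction rule: inverse_hull.induct)
  case (gen s)
  show ?case
  proof (cases "s = 0")
    case True
    then have "theta s = Map.empty" unfolding theta_def by auto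
    then show ?thesis unfolding good_def by blast
  next
    case False
    have "good (theta s \<circ>\<^sub>m pinv (theta (splus s)))"
      by (rule good_TT) (metis splus_eq splus_nz splus False)
    then show ?thesis using theta_as[OF False] by simp
  qed
next
  case (inv f)
  show ?case
  proof (cases "f = Map.empty")
    case True
    then have "pinv f = Map.empty" unfolding pinv_def by auto
    then show ?thesis unfolding good_def by blast
  next
    case False
    then obtain s t where "s\<noteq>0" "t\<noteq>0" "splus s = splus t" "f = theta s \<circ>\<^sub>m pinv (theta t)"
      using inv.IH unfolding good_def by blast
    then have "pinv f = theta t \<circ>\<^sub>m pinv (theta s)" using pinv_TT by simp
    then show ?thesis unfolding good_def using \<open>s\<noteq>0\<close> \<open>t\<noteq>0\<close> \<open>splus s = splus t\<close> by metis
  qed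
next
  case (comp f g)
  show ?case
  proof (cases "f = Map.empty \<or> g = Map.empty")
    case True
    then have "f \<circ>\<^sub>m g = Map.empty" by auto
    then show ?thesis unfolding good_def by blast
  next
    case False
    then obtain s1 t1 s2 t2 where "s1\<noteq>0" "t1\<noteq>0" "s2\<noteq>0" "t2\<noteq>0"
      "f = theta s1 \<circ>\<^sub>m pinv (theta t1)" "g = theta s2 \<circ>\<^sub>m pinv (theta t2)"
      using comp.IH unfolding good_def by blast
    then show ?thesis using comp_good by simp
  qed
qed

end

theorem theorem7p22:
  fixes T :: "('a::{semigroup_mult,mult_zero}) itself"
  assumes "categorical_at_zero T"
    and "zero_left_cancellative T"
    and "right_reductive T"
    and "right_local_units T"
    and "has_lcms T"
  shows "{f \<in> (inverse_hull :: ('a \<Rightarrow> 'a option) set). f \<noteq> Map.empty}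
           = {theta s \<circ>\<^sub>m pinv (theta t) | s t :: 'a. s \<noteq> 0 \<and> t \<noteq> 0 \<and> splus s = splus t}
         \<and> (\<forall>s1 t1 s2 t2 :: 'a. s1 \<noteq> 0 \<longrightarrow> t1 \<noteq> 0 \<longrightarrow> s2 \<noteq> 0 \<longrightarrow> t2 \<noteq> 0 \<longrightarrow>
           splus s1 = splus t1 \<longrightarrow> splus s2 = splus t2 \<longrightarrow>
           (theta s1 \<circ>\<^sub>m pinv (theta t1) = theta s2 \<circ>\<^sub>m pinv (theta t2)
            \<longleftrightarrow> (\<exists>x y. x * y = splus s1 \<and> y * x = splus s2 \<and> s1 * x = s2 \<and> t1 * x = t2
                      \<and> s2 * y = s1 \<and> t2 * y = t1)))"
proof -
  interpret hyp T using assms by unfold_locales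
  have val: "(theta s \<circ>\<^sub>m pinv (theta t)) t = Some s"
    if "s \<noteq> 0" "t \<noteq> 0" "splus s = splus t" for s t :: 'a
    unfolding TT using that splus(2)[of s] splus(2)[of t]
    by (intro exI[of _ "splus t"]) metis
  have P1: "{f \<in> (inverse_hull :: ('a \<Rightarrow> 'a option) set). f \<noteq> Map.empty}
           = {theta s \<circ>\<^sub>m pinv (theta t) | s t :: 'a. s \<noteq> 0 \<and> t \<noteq> 0 \<and> splus s = splus t}"
  proof (rule set_eqI, rule iffI)
    fix f :: "'a \<Rightarrow> 'a option"
    assume "f \<in> {f \<in> inverse_hull. f \<noteq> Map.empty}"
    then show "f \<in> {theta s \<circ>\<^sub>m pinv (theta t) | s t :: 'a. s \<noteq> 0 \<and> t \<noteq> 0 \<and> splus s = splus t}"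
      using hull_good unfolding good_def by blast
  next
    fix f :: "'a \<Rightarrow> 'a option"
    assume "f \<in> {theta s \<circ>\<^sub>m pinv (theta t) | s t :: 'a. s \<noteq> 0 \<and> t \<noteq> 0 \<and> splus s = splus t}"
    then obtain s t :: 'a where st: "s \<noteq> 0" "t \<noteq> 0" "splus s = splus t"
      "f = theta s \<circ>\<^sub>m pinv (theta t)" by blast
    have "f \<in> inverse_hull" using st(4)
      by (simp add: inverse_hull.comp inverse_hull.gen inverse_hull.inv)
    moreover have "f \<noteq> Map.empty" using val[OF st(1-3)] st(4) by auto
    ultimately show "f \<in> {f \<in> inverse_hull. f \<noteq> Map.empty}" by blast
  qed
  have P2: "theta s1 \<circ>\<^sub>m pinv (theta t1) = theta s2 \<circ>\<^sub>m pinv (theta t2)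
            \<longleftrightarrow> (\<exists>x y. x * y = splus s1 \<and> y * x = splus s2 \<and> s1 * x = s2 \<and> t1 * x = t2
                      \<and> s2 * y = s1 \<and> t2 * y = t1)"
    if nz: "s1 \<noteq> 0" "t1 \<noteq> 0" "s2 \<noteq> 0" "t2 \<noteq> 0" and e: "splus s1 = splus t1" "splus s2 = splus t2"
    for s1 t1 s2 t2 :: 'a
  proof
    assume eq: "theta s1 \<circ>\<^sub>m pinv (theta t1) = theta s2 \<circ>\<^sub>m pinv (theta t2)"
    have "(theta s2 \<circ>\<^sub>m pinv (theta t2)) t1 = Some s1" using val[of s1 t1] nz e eq by simp
    then obtain y where y: "t1 = t2*y" "s1 = s2*y" unfolding TT by blast
    have "(theta s1 \<circ>\<^sub>m pinv (theta t1)) t2 = Some s2" using val[of s2 t2] nz e eq by simp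
    then obtain x where x: "t2 = t1*x" "s2 = s1*x" unfolding TT by blast
    have "t1*(x*y) = t1 * splus t1" using x y splus(2)[OF nz(2)] by (simp add: mult.assoc[symmetric])
    then have xy: "x*y = splus s1" using canc e nz by (metis splus(2))
    have "t2*(y*x) = t2 * splus t2" using x y splus(2)[OF nz(4)] by (simp add: mult.assoc[symmetric])
    then have yx: "y*x = splus s2" using canc e nz by (metis splus(2))
    show "\<exists>x y. x * y = splus s1 \<and> y * x = splus s2 \<and> s1 * x = s2 \<and> t1 * x = t2
                      \<and> s2 * y = s1 \<and> t2 * y = t1" using x y xy yx by metis
  next
    assume "\<exists>x y. x * y = splus s1 \<and> y * x = splus s2 \<and> s1 * x = s2 \<and> t1 * x = t2
                      \<and> s2 * y = s1 \<and> t2 * y = t1"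
    then obtain x y where xy: "s1 * x = s2" "t1 * x = t2" "s2 * y = s1" "t2 * y = t1" by blast
    show "theta s1 \<circ>\<^sub>m pinv (theta t1) = theta s2 \<circ>\<^sub>m pinv (theta t2)"
    proof (rule map_eqI')
      fix w v
      show "(theta s1 \<circ>\<^sub>m pinv (theta t1)) w = Some v \<longleftrightarrow> (theta s2 \<circ>\<^sub>m pinv (theta t2)) w = Some v"
        unfolding TT
      proof
        assume "\<exists>z. t1 * z \<noteq> 0 \<and> s1 * z \<noteq> 0 \<and> w = t1 * z \<and> v = s1 * z"
        then obtain z where "t1 * z \<noteq> 0 \<and> s1 * z \<noteq> 0 \<and> w = t1 * z \<and> v = s1 * z" by blast
        then show "\<exists>z. t2 * z \<noteq> 0 \<and> s2 * z \<noteq> 0 \<and> w = t2 * z \<and> v = s2 * z"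
          using xy by (intro exI[of _ "y*z"]) (simp add: mult.assoc[symmetric])
      next
        assume "\<exists>z. t2 * z \<noteq> 0 \<and> s2 * z \<noteq> 0 \<and> w = t2 * z \<and> v = s2 * z"
        then obtain z where "t2 * z \<noteq> 0 \<and> s2 * z \<noteq> 0 \<and> w = t2 * z \<and> v = s2 * z" by blast
        then show "\<exists>z. t1 * z \<noteq> 0 \<and> s1 * z \<noteq> 0 \<and> w = t1 * z \<and> v = s1 * z"
          using xy by (intro exI[of _ "x*z"]) (simp add: mult.assoc[symmetric])
      qed
    qed
  qed
  show ?thesis using P1 P2 by blast
qed

end
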